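(* Let $\theta_1,\theta_2,\dots$ be real numbers with $\theta_n\to\theta$ as $n\to\infty$, and define $\Lambda$ on $[1,\infty)$ by $\Lambda\bigl(\frac1{1-s}\bigr)=\exp\sum_{j\ge1}\frac{\theta_j-\theta}{j}s^j$ for $0\le s<1$. Let $(x_n)$, $(y_n)$ be sequences in $[1,\infty)$ with $x_n\to\infty$, $y_n\to\infty$, and suppose there is a constant $C>1$ with $\frac1C\le\frac{x_n}{y_n}\le C$ for all $n$. Then $\displaystyle\lim_{n\to\infty}\frac{\Lambda(x_n)}{\Lambda(y_n)}=1$. *)

theory Defs
  imports Complex_Main
begin

text \<open>Lambda on [1,inf): Lambda(1/(1-s)) = exp (sum_{j>=1} (theta_j - theta)/j * s^j), 0 <= s < 1.
  Equivalently, with s = 1 - 1/x. The sequence theta_1, theta_2, ... is encoded as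
  th :: nat => real with th j = theta_j (th 0 unused).\<close>
definition Lambda :: "(nat \<Rightarrow> real) \<Rightarrow> real \<Rightarrow> real \<Rightarrow> real" where
  "Lambda th \<theta> x =
     exp (\<Sum>j. (th (Suc j) - \<theta>) / real (Suc j) * (1 - 1 / x) ^ Suc j)"

end

theory Submission
  imports Defs
begin

lemma pow_diff_bound:
  fixes s t m :: real
  assumes "0 \<le> s" "s \<le> m" "0 \<le> t" "t \<le> m"
  shows "\<bar>s ^ Suc k - t ^ Suc k\<bar> \<le> real (Suc k) * \<bar>s - t\<bar> * m ^ k"
proof (induction k)
  case 0 then show ?case by simp
next
  case (Suc k)
  have eq: "s ^ Suc (Suc k) - t ^ Suc (Suc k) = s * (s ^ Suc k - t ^ Suc k) + t ^ Suc k * (s - t)"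
    by (simp add: algebra_simps)
  have m0: "0 \<le> m" using assms by linarith
  have "\<bar>s * (s ^ Suc k - t ^ Suc k)\<bar> \<le> m * (real (Suc k) * \<bar>s - t\<bar> * m ^ k)"
    unfolding abs_mult using Suc assms by (intro mult_mono) auto
  moreover have "\<bar>t ^ Suc k * (s - t)\<bar> \<le> m ^ Suc k * \<bar>s - t\<bar>"
    unfolding abs_mult using assms power_mono[of t m "Suc k"] by (intro mult_mono) auto
  ultimately have "\<bar>s ^ Suc (Suc k) - t ^ Suc (Suc k)\<bar> \<le> m * (real (Suc k) * \<bar>s - t\<bar> * m ^ k) + m ^ Suc k * \<bar>s - t\<bar>"
    unfolding eq by (meson abs_triangle_ineq add_mono order_trans)
  also have "\<dots> = real (Suc (Suc k)) * \<bar>s - t\<bar> * m ^ Suc k"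
    by (simp add: algebra_simps)
  finally show ?case .
qed

definition FF :: "(nat \<Rightarrow> real) \<Rightarrow> real \<Rightarrow> real" where
  "FF a s = (\<Sum>j. a j / real (Suc j) * s ^ Suc j)"

lemma FF_summable:
  assumes "\<And>j. \<bar>a j\<bar> \<le> B" "0 \<le> s" "s < 1"
  shows "summable (\<lambda>j. a j / real (Suc j) * s ^ Suc j)"
proof -
  have "summable (\<lambda>j. B * s ^ Suc j)"
    using assms by (intro summable_mult) (simp add: summable_geometric)
  moreover have "norm (a j / real (Suc j) * s ^ Suc j) \<le> B * s ^ Suc j" for j
  proof -
    have "\<bar>a j\<bar> / real (Suc j) \<le> \<bar>a j\<bar>" using divide_left_mono[of 1 "real (Suc j)" "\<bar>a j\<bar>"] by simp
    also have "\<dots> \<le> B" by (rule assms)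
    finally have "\<bar>a j\<bar> / real (Suc j) * s ^ Suc j \<le> B * s ^ Suc j"
      using assms by (intro mult_right_mono) auto
    then show ?thesis using assms by (simp add: abs_mult)
  qed
  ultimately show ?thesis by (rule summable_comparison_test'[where N=0])
qed

lemma key:
  assumes B: "\<And>j. \<bar>a j\<bar> \<le> B" and N: "\<And>j. j \<ge> N \<Longrightarrow> \<bar>a j\<bar> \<le> \<epsilon>" and "0 \<le> \<epsilon>"
    and s: "0 \<le> s" "s < 1" and t: "0 \<le> t" "t < 1"
  shows "\<bar>FF a s - FF a t\<bar> \<le> \<bar>s - t\<bar> * (B * real N) + \<bar>s - t\<bar> * \<epsilon> / (1 - max s t)"
proof -
  define m where "m = max s t"
  have m: "0 \<le> m" "m < 1" "s \<le> m" "t \<le> m" using s t by (auto simp: m_def)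
  define d where "d j = a j / real (Suc j) * s ^ Suc j - a j / real (Suc j) * t ^ Suc j" for j
  define g where "g j = \<bar>s - t\<bar> * ((if j < N then B else 0) + \<epsilon> * m ^ j)" for j
  have B0: "0 \<le> B" using B[of 0] by linarith
  have sg1: "summable (\<lambda>j. if j < N then B else 0)"
    by (rule summable_finite[of "{..<N}"]) auto
  have sm1: "suminf (\<lambda>j. if j < N then B else (0::real)) = B * real N"
    by (subst suminf_finite[of "{..<N}"]) auto
  have sg2: "summable (\<lambda>j. \<epsilon> * m ^ j)" using m by (intro summable_mult) simp
  have sm2: "suminf (\<lambda>j. \<epsilon> * m ^ j) = \<epsilon> / (1 - m)"
    using m by (subst suminf_mult) (auto simp: suminf_geometric)
  have sg: "summable g" unfolding g_def by (intro summable_mult summable_add sg1 sg2)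
  have sumg: "suminf g = \<bar>s - t\<bar> * (B * real N) + \<bar>s - t\<bar> * \<epsilon> / (1 - m)"
    proof -
    have "suminf g = \<bar>s - t\<bar> * (\<Sum>j. (if j < N then B else 0) + \<epsilon> * m ^ j)"
      unfolding g_def by (rule suminf_mult) (intro summable_add sg1 sg2)
    also have "(\<Sum>j. (if j < N then B else 0) + \<epsilon> * m ^ j) = B * real N + \<epsilon> / (1 - m)"
      using suminf_add[OF sg1 sg2] sm1 sm2 by simp
    finally show ?thesis by (simp add: distrib_left)
  qed
  have dg: "\<bar>d j\<bar> \<le> g j" for j
  proof -
    have "\<bar>d j\<bar> = \<bar>a j\<bar> / real (Suc j) * \<bar>s ^ Suc j - t ^ Suc j\<bar>"
      proof -
      have "d j = a j / real (Suc j) * (s ^ Suc j - t ^ Suc j)"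
        unfolding d_def by (simp only: right_diff_distrib)
      then show ?thesis by (simp add: abs_mult)
    qed
    also have "\<dots> \<le> \<bar>a j\<bar> / real (Suc j) * (real (Suc j) * \<bar>s - t\<bar> * m ^ j)"
      by (intro mult_left_mono pow_diff_bound m s t) auto
    also have "\<dots> = \<bar>s - t\<bar> * (\<bar>a j\<bar> * m ^ j)" by simp
    also have "\<dots> \<le> g j" unfolding g_def
    proof (intro mult_left_mono)
      have mj: "0 \<le> m ^ j" "m ^ j \<le> 1" using m by (auto intro: power_le_one)
      show "\<bar>a j\<bar> * m ^ j \<le> (if j < N then B else 0) + \<epsilon> * m ^ j"
      proof (cases "j < N")
        case True
        have "\<bar>a j\<bar> * m ^ j \<le> B * 1" using B[of j] mj B0 by (intro mult_mono) auto
        moreover have "0 \<le> \<epsilon> * m ^ j" using mj \<open>0 \<le> \<epsilon>\<close> by simp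
        ultimately show ?thesis using True by simp
      next
        case False
        then show ?thesis using N[of j] mj by (simp add: mult_right_mono)
      qed
    qed simp
    finally show ?thesis .
  qed
  have sd: "summable (\<lambda>j. \<bar>d j\<bar>)"
    by (rule summable_comparison_test'[OF sg, where N=0]) (use dg in auto)
  have "FF a s - FF a t = suminf d"
    unfolding FF_def d_def using FF_summable[OF B s] FF_summable[OF B t]
    by (subst suminf_diff) auto
  also have "\<bar>\<dots>\<bar> \<le> (\<Sum>j. \<bar>d j\<bar>)" by (rule summable_rabs[OF sd])
  also have "\<dots> \<le> suminf g" by (rule suminf_le[OF dg sd sg])
  finally show ?thesis unfolding sumg m_def .
qed

lemma ratio_bound:
  fixes x y C :: real
  assumes "x \<ge> 1" "y \<ge> 1" "1 / C \<le> x / y" "x / y \<le> C" "C > 1"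
  shows "\<bar>(1 - 1/x) - (1 - 1/y)\<bar> \<le> (C - 1) * (1 - max (1 - 1/x) (1 - 1/y))"
proof (cases "x \<ge> y")
  case True
  have "1/x \<le> 1/y" using True assms by (simp add: frac_le)
  then have e: "\<bar>(1 - 1/x) - (1 - 1/y)\<bar> = 1/y - 1/x" "max (1 - 1/x) (1 - 1/y) = 1 - 1/x" by auto
  have "x / y - 1 \<le> C - 1" using assms by simp
  then have "(x/y - 1) / x \<le> (C - 1) / x" using assms by (intro divide_right_mono) auto
  moreover have "(x/y - 1) / x = 1/y - 1/x" using assms by (simp add: field_simps)
  ultimately show ?thesis unfolding e by simp
next
  case False
  have "1/y \<le> 1/x" using False assms by (simp add: frac_le)
  then have e: "\<bar>(1 - 1/x) - (1 - 1/y)\<bar> = 1/x - 1/y" "max (1 - 1/x) (1 - 1/y) = 1 - 1/y" by auto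
  have "y / x \<le> C" using assms by (simp add: field_simps)
  then have "(y/x - 1) / y \<le> (C - 1) / y" using assms by (intro divide_right_mono) auto
  moreover have "(y/x - 1) / y = 1/x - 1/y" using assms by (simp add: field_simps)
  ultimately show ?thesis unfolding e by simp
qed

theorem lemma6p2:
  fixes th :: "nat \<Rightarrow> real" and \<theta> C :: real and x y :: "nat \<Rightarrow> real"
  assumes "th \<longlonglongrightarrow> \<theta>"
    and "\<And>n. x n \<ge> 1" and "\<And>n. y n \<ge> 1"
    and "filterlim x at_top sequentially" and "filterlim y at_top sequentially"
    and "C > 1"
    and "\<And>n. 1 / C \<le> x n / y n \<and> x n / y n \<le> C"
  shows "(\<lambda>n. Lambda th \<theta> (x n) / Lambda th \<theta> (y n)) \<longlonglongrightarrow> 1"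
proof -
  define a where "a j = th (Suc j) - \<theta>" for j
  have L: "Lambda th \<theta> z = exp (FF a (1 - 1/z))" for z
    unfolding Lambda_def FF_def a_def by simp
  define D where "D n = FF a (1 - 1/x n) - FF a (1 - 1/y n)" for n
  have a0: "a \<longlonglongrightarrow> 0" unfolding a_def
    using tendsto_diff[OF LIMSEQ_Suc[OF assms(1)] tendsto_const[of \<theta>]] by simp
  obtain B where B: "B > 0" "\<And>j. \<bar>a j\<bar> \<le> B"
    using convergent_imp_Bseq[OF convergentI[OF a0]] by (auto elim!: BseqE)
  have D0: "D \<longlonglongrightarrow> 0"
  proof (rule tendsto_iff[THEN iffD2], intro allI impI)
    fix e :: real assume e: "e > 0"
    define \<epsilon> where "\<epsilon> = e / (2 * C)"
    have ep: "\<epsilon> > 0" using e assms(6) by (simp add: \<epsilon>_def)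
    have "eventually (\<lambda>j. dist (a j) 0 < \<epsilon>) sequentially"
      using tendsto_iff[THEN iffD1, OF a0] ep by blast
    then obtain N where N: "\<And>j. j \<ge> N \<Longrightarrow> \<bar>a j\<bar> \<le> \<epsilon>"
      unfolding eventually_sequentially dist_real_def by (metis diff_zero less_imp_le)
    define K where "K = 4 * (B * real N + 1) / e"
    have K: "K > 0" using B e unfolding K_def by (intro divide_pos_pos) (auto intro: add_nonneg_pos)
    have ev: "eventually (\<lambda>n. K \<le> x n \<and> K \<le> y n) sequentially"
      using assms(4,5) unfolding filterlim_at_top by (auto intro: eventually_conj)
    show "eventually (\<lambda>n. dist (D n) 0 < e) sequentially"
    proof (rule eventually_mono[OF ev])
      fix n assume n: "K \<le> x n \<and> K \<le> y n"
      define s where "s = 1 - 1 / x n"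
      define t where "t = 1 - 1 / y n"
      have x1: "x n \<ge> 1" and y1: "y n \<ge> 1" using assms(2,3) by auto
      have st: "0 \<le> s" "s < 1" "0 \<le> t" "t < 1" using x1 y1 by (auto simp: s_def t_def)
      have k: "\<bar>D n\<bar> \<le> \<bar>s - t\<bar> * (B * real N) + \<bar>s - t\<bar> * \<epsilon> / (1 - max s t)"
        unfolding D_def s_def[symmetric] t_def[symmetric]
        by (rule key[OF B(2) N less_imp_le[OF ep] st])
      have rb: "\<bar>s - t\<bar> \<le> (C - 1) * (1 - max s t)"
        unfolding s_def t_def using ratio_bound[OF x1 y1 _ _ assms(6)] assms(7)[of n] by blast
      have mpos: "1 - max s t > 0" using st by auto
      have second: "\<bar>s - t\<bar> * \<epsilon> / (1 - max s t) \<le> (C - 1) * \<epsilon>"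
      proof -
        have "\<bar>s - t\<bar> / (1 - max s t) \<le> C - 1" using rb mpos by (simp add: divide_le_eq)
        then have "\<bar>s - t\<bar> / (1 - max s t) * \<epsilon> \<le> (C - 1) * \<epsilon>" using ep by (intro mult_right_mono) auto
        then show ?thesis by (simp add: field_simps)
      qed
      have second': "(C - 1) * \<epsilon> < e / 2"
        using e assms(6) by (simp add: \<epsilon>_def field_simps)
      have inv: "1 / x n \<le> 1 / K" "1 / y n \<le> 1 / K" using n K by (auto intro: frac_le)
      have ip: "0 \<le> 1 / x n" "0 \<le> 1 / y n" using x1 y1 by auto
      have "\<bar>s - t\<bar> \<le> 1 / K" using inv ip unfolding s_def t_def by linarith
      also have "1 / K = e / (4 * (B * real N + 1))" using K_def by simp
      finally have st_small: "\<bar>s - t\<bar> \<le> e / (4 * (B * real N + 1))" .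
      have first: "\<bar>s - t\<bar> * (B * real N) \<le> e / (4 * (B * real N + 1)) * (B * real N)"
        using st_small B by (intro mult_right_mono) auto
      have first': "e / (4 * (B * real N + 1)) * (B * real N) < e / 2"
      proof -
        have p: "B * real N \<ge> 0" using B by simp
        have "e / (4 * (B * real N + 1)) * (B * real N) = e * (B * real N) / (4 * (B * real N + 1))" by simp
        also have "\<dots> < e / 2"
        proof -
          have q: "0 \<le> e * (B * real N)" using p e by simp
          have "e * (4 * (B * real N + 1)) = 4 * (e * (B * real N)) + 4 * e" by (simp add: algebra_simps)
          then have "e * (B * real N) * 2 < e * (4 * (B * real N + 1))" using q e by linarith
          then show ?thesis using p e by (simp add: divide_less_eq less_divide_eq)
        qed
        finally show ?thesis .
      qed
      have "\<bar>D n\<bar> < e" using k first first' second second' by linarith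
      then show "dist (D n) 0 < e" by (simp add: dist_real_def)
    qed
  qed
  have "(\<lambda>n. exp (D n)) \<longlonglongrightarrow> exp 0" by (intro tendsto_exp D0)
  moreover have "exp (D n) = Lambda th \<theta> (x n) / Lambda th \<theta> (y n)" for n
    unfolding L D_def by (simp add: exp_diff)
  ultimately show ?thesis by simp
qed

end
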